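(* For $c>0$ (and any $s>0$, $F>1$), at every time $t$ with $Z^t>0$, conditional on $(x^t,\lambda^t)$, $$\mathbb E[Z^t-Z^{t+1}\mid \bar A]\ge -\frac{c}{1-e^{-c}}.$$ The same bound holds with $Z^t-Z^{t+1}$ replaced by $\min\{1,Z^t-Z^{t+1}\}$.
   Context: Consider the SA-$(1,\lambda)$-EA on a dynamic monotone function: a function $f:\{0,1\}^n\to\mathbb R$ is monotone if $f(x)>f(y)$ whenever $x\ne y$ and $x_i\ge y_i$ for all $i$; $(f^t)_{t\ge0}$ is a sequence of monotone functions, $f^t$ possibly chosen adversarially depending on $x^t$. The algorithm (with constants $c>0$, $s>0$, $F>1$) maintains $x^t\in\{0,1\}^n$, real $\lambda^t\ge1$; in generation $t$ it creates $\lfloor\lambda^t\rceil$ (nearest integer) offspring $y^{t,j}$, each independently by flipping every bit of $x^t$ independently with probability $c/n$; $x^{t+1}$ is an offspring maximizing $f^t$ (ties uniformly at random); $\lambda^{t+1}=\max\{1,\lambda^t/F\}$ if $f^t(x^{t+1})>f^t(x^t)$, else $\lambda^{t+1}=F^{1/s}\lambda^t$. $Z^t$ is the number of zero-bits of $x^t$. $A$ is the event that some offspring $y^{t,j}$ flips no one-bit of $x^t$; $\bar A$ is its complement (every offspring flips at least one one-bit of $x^t$). *)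

theory Defs
  imports "HOL-Probability.Probability"
begin

text \<open>Bit strings in {0,1}^n are represented as functions nat => bool that are
  False outside {..<n}; x i = True means bit i is a one-bit.\<close>

definition bitstrings :: "nat \<Rightarrow> (nat \<Rightarrow> bool) set" where
  "bitstrings n = {x. \<forall>i. n \<le> i \<longrightarrow> \<not> x i}"

definition monotone_bitfun :: "nat \<Rightarrow> ((nat \<Rightarrow> bool) \<Rightarrow> real) \<Rightarrow> bool" where
  "monotone_bitfun n f \<longleftrightarrow>
     (\<forall>x\<in>bitstrings n. \<forall>y\<in>bitstrings n. x \<noteq> y \<and> (\<forall>i. y i \<longrightarrow> x i) \<longrightarrow> f x > f y)"

definition zeros :: "nat \<Rightarrow> (nat \<Rightarrow> bool) \<Rightarrow> nat" where
  "zeros n x = card {i. i < n \<and> \<not> x i}"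

definition mutate :: "nat \<Rightarrow> real \<Rightarrow> (nat \<Rightarrow> bool) \<Rightarrow> (nat \<Rightarrow> bool) pmf" where
  "mutate n c x =
     map_pmf (\<lambda>flip i. x i \<noteq> flip i) (Pi_pmf {..<n} False (\<lambda>_. bernoulli_pmf (c / n)))"

definition num_offspring :: "real \<Rightarrow> nat" where
  "num_offspring lam = nat (round lam)"

definition generation ::
  "nat \<Rightarrow> real \<Rightarrow> ((nat \<Rightarrow> bool) \<Rightarrow> real) \<Rightarrow> (nat \<Rightarrow> bool) \<Rightarrow> real
     \<Rightarrow> ((nat \<Rightarrow> nat \<Rightarrow> bool) \<times> (nat \<Rightarrow> bool)) pmf" where
  "generation n c f x lam =
     (let k = num_offspring lam in
      do {
        ys \<leftarrow> Pi_pmf {..<k} (\<lambda>_. False) (\<lambda>_. mutate n c x);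
        j \<leftarrow> pmf_of_set {j. j < k \<and> (\<forall>j'<k. f (ys j') \<le> f (ys j))};
        return_pmf (ys, ys j)
      })"

definition event_notA :: "nat \<Rightarrow> (nat \<Rightarrow> bool) \<Rightarrow> real
     \<Rightarrow> ((nat \<Rightarrow> nat \<Rightarrow> bool) \<times> (nat \<Rightarrow> bool)) set" where
  "event_notA n x lam =
     {(ys, x'). \<forall>j < num_offspring lam. \<exists>i < n. x i \<and> \<not> ys j i}"

end

theory Submission
  imports Defs
begin


lemma double_count:
  fixes H :: "'a set \<Rightarrow> real"
  assumes fin: "finite U"
  shows "(\<Sum>A\<in>{A. A \<subseteq> U \<and> card A = Suc s}. \<Sum>i\<in>A. H (A - {i}))
       = (\<Sum>B\<in>{B. B \<subseteq> U \<and> card B = s}. \<Sum>i\<in>U - B. H B)"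
proof -
  have fA: "finite {A. A \<subseteq> U \<and> card A = Suc s}" using fin by (auto intro: finite_subset[of _ "Pow U"])
  have fB: "finite {B. B \<subseteq> U \<and> card B = s}" using fin by (auto intro: finite_subset[of _ "Pow U"])
  have "(\<Sum>A\<in>{A. A \<subseteq> U \<and> card A = Suc s}. \<Sum>i\<in>A. H (A - {i}))
      = (\<Sum>(A,i)\<in>Sigma {A. A \<subseteq> U \<and> card A = Suc s} (\<lambda>A. A). H (A - {i}))"
    using fA fin by (subst sum.Sigma) (auto intro: finite_subset)
  also have "\<dots> = (\<Sum>(B,i)\<in>Sigma {B. B \<subseteq> U \<and> card B = s} (\<lambda>B. U - B). H B)"
  proof (rule sum.reindex_bij_betw[symmetric, where h="\<lambda>(B,i). (insert i B, i)", THEN trans])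
    show "bij_betw (\<lambda>(B, i). (insert i B, i)) (Sigma {B. B \<subseteq> U \<and> card B = s} (\<lambda>B. U - B))
          (Sigma {A. A \<subseteq> U \<and> card A = Suc s} (\<lambda>A. A))"
    proof (rule bij_betwI[where g="\<lambda>(A,i). (A - {i}, i)"])
      show "(\<lambda>(B, i). (insert i B, i)) \<in> Sigma {B. B \<subseteq> U \<and> card B = s} (\<lambda>B. U - B) \<rightarrow> Sigma {A. A \<subseteq> U \<and> card A = Suc s} (\<lambda>A. A)"
        using fin by (auto simp: finite_subset)
      show "(\<lambda>(A, i). (A - {i}, i)) \<in> Sigma {A. A \<subseteq> U \<and> card A = Suc s} (\<lambda>A. A) \<rightarrow> Sigma {B. B \<subseteq> U \<and> card B = s} (\<lambda>B. U - B)"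
        using fin by (auto simp: finite_subset card_Diff_singleton)
    qed (auto simp: insert_absorb)
    show "(\<Sum>x\<in>Sigma {B. B \<subseteq> U \<and> card B = s} (\<lambda>B. U - B). case (case x of (B, i) \<Rightarrow> (insert i B, i)) of (A, i) \<Rightarrow> H (A - {i})) =
    (\<Sum>(B, i)\<in>Sigma {B. B \<subseteq> U \<and> card B = s} (\<lambda>B. U - B). H B)"
      by (intro sum.cong) auto
  qed
  also have "\<dots> = (\<Sum>B\<in>{B. B \<subseteq> U \<and> card B = s}. \<Sum>i\<in>U - B. H B)"
    using fB fin by (subst sum.Sigma) auto
  finally show ?thesis .
qed

lemma level_dec:
  fixes H :: "'a set \<Rightarrow> real"
  assumes fin: "finite U"
    and dec: "\<And>A A'. A \<subseteq> A' \<Longrightarrow> A' \<subseteq> U \<Longrightarrow> H A' \<le> H A"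
    and s: "s < card U"
  shows "real (Suc s) * (\<Sum>A\<in>{A. A \<subseteq> U \<and> card A = Suc s}. H A)
       \<le> real (card U - s) * (\<Sum>B\<in>{B. B \<subseteq> U \<and> card B = s}. H B)"
proof -
  have "real (Suc s) * (\<Sum>A\<in>{A. A \<subseteq> U \<and> card A = Suc s}. H A)
      = (\<Sum>A\<in>{A. A \<subseteq> U \<and> card A = Suc s}. \<Sum>i\<in>A. H A)"
    by (simp add: sum_distrib_left)
  also have "\<dots> \<le> (\<Sum>A\<in>{A. A \<subseteq> U \<and> card A = Suc s}. \<Sum>i\<in>A. H (A - {i}))"
    by (intro sum_mono dec) auto
  also have "\<dots> = (\<Sum>B\<in>{B. B \<subseteq> U \<and> card B = s}. \<Sum>i\<in>U - B. H B)"
    by (rule double_count[OF fin])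
  also have "\<dots> = real (card U - s) * (\<Sum>B\<in>{B. B \<subseteq> U \<and> card B = s}. H B)"
    using fin by (auto simp: sum_distrib_left card_Diff_subset finite_subset intro!: sum.cong)
  finally show ?thesis .
qed



lemma chebyshev_sum:
  fixes u a b :: "nat \<Rightarrow> real"
  assumes "\<And>i. i \<in> I \<Longrightarrow> u i \<ge> 0"
    and "\<And>i j. i \<in> I \<Longrightarrow> j \<in> I \<Longrightarrow> (a i - a j) * (b i - b j) \<le> 0"
  shows "(\<Sum>i\<in>I. u i * a i * b i) * (\<Sum>i\<in>I. u i) \<le> (\<Sum>i\<in>I. u i * a i) * (\<Sum>i\<in>I. u i * b i)"
proof -
  have le: "(\<Sum>i\<in>I. \<Sum>j\<in>I. u i * u j * ((a i - a j) * (b i - b j))) \<le> 0"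
    using assms by (intro sum_nonpos mult_nonneg_nonpos[OF mult_nonneg_nonneg]) auto
  have eq: "(\<Sum>i\<in>I. \<Sum>j\<in>I. u i * u j * ((a i - a j) * (b i - b j)))
     = 2 * ((\<Sum>i\<in>I. u i * a i * b i) * (\<Sum>i\<in>I. u i) - (\<Sum>i\<in>I. u i * a i) * (\<Sum>i\<in>I. u i * b i))"
  proof -
    have e: "u i * u j * ((a i - a j) * (b i - b j)) = (u i * a i * b i) * u j + u i * (u j * a j * b j)
       - (u i * a i) * (u j * b j) - (u i * b i) * (u j * a j)" for i j
      by (simp add: algebra_simps)
    have s1: "(\<Sum>i\<in>I. \<Sum>j\<in>I. (u i * a i * b i) * u j) = (\<Sum>i\<in>I. u i * a i * b i) * (\<Sum>i\<in>I. u i)"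
      by (simp add: sum_distrib_left sum_distrib_right) (rule sum.swap)
    have s2: "(\<Sum>i\<in>I. \<Sum>j\<in>I. u i * (u j * a j * b j)) = (\<Sum>i\<in>I. u i * a i * b i) * (\<Sum>i\<in>I. u i)"
      by (simp add: sum_distrib_left sum_distrib_right mult.commute) (rule sum.swap)
    have s3: "(\<Sum>i\<in>I. \<Sum>j\<in>I. (u i * a i) * (u j * b j)) = (\<Sum>i\<in>I. u i * a i) * (\<Sum>i\<in>I. u i * b i)"
      by (simp add: sum_distrib_left sum_distrib_right) (rule sum.swap)
    have s4: "(\<Sum>i\<in>I. \<Sum>j\<in>I. (u i * b i) * (u j * a j)) = (\<Sum>i\<in>I. u i * a i) * (\<Sum>i\<in>I. u i * b i)"
      by (simp add: sum_distrib_left sum_distrib_right mult.commute)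
    have "(\<Sum>i\<in>I. \<Sum>j\<in>I. u i * u j * ((a i - a j) * (b i - b j)))
      = (\<Sum>i\<in>I. \<Sum>j\<in>I. (u i * a i * b i) * u j) + (\<Sum>i\<in>I. \<Sum>j\<in>I. u i * (u j * a j * b j))
        - (\<Sum>i\<in>I. \<Sum>j\<in>I. (u i * a i) * (u j * b j)) - (\<Sum>i\<in>I. \<Sum>j\<in>I. (u i * b i) * (u j * a j))"
      unfolding e by (simp only: sum_subtractf sum.distrib)
    then show ?thesis using s1 s2 s3 s4 by simp
  qed
  have aux: "\<And>(x::real) (y::real). 2 * (x - y) \<le> 0 \<Longrightarrow> x \<le> y" by auto
  show ?thesis by (rule aux, rule ord_eq_le_trans[OF eq[symmetric] le])
qed

lemma binom_sum1:
  fixes q :: real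
  shows "(\<Sum>s=1..m. real (m choose s) * q ^ s * (1 - q) ^ (m - s)) = 1 - (1 - q) ^ m"
proof -
  have "1 = (q + (1 - q)) ^ m" by simp
  also have "\<dots> = (\<Sum>k\<le>m. real (m choose k) * q ^ k * (1 - q) ^ (m - k))"
    by (rule binomial_ring)
  also have "\<dots> = (1-q)^m + (\<Sum>k=1..m. real (m choose k) * q ^ k * (1 - q) ^ (m - k))"
    by (simp add: atMost_atLeast0 sum.atLeast_Suc_atMost)
  finally show ?thesis by simp
qed

lemma binom_sum2:
  fixes q :: real
  shows "(\<Sum>s=1..m. real (m choose s) * q ^ s * (1 - q) ^ (m - s) * real s) = real m * q"
proof (cases m)
  case 0 then show ?thesis by simp
next
  case (Suc k)
  have "(\<Sum>s=1..Suc k. real (Suc k choose s) * q ^ s * (1 - q) ^ (Suc k - s) * real s)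
      = (\<Sum>t=0..k. real (Suc k choose Suc t) * q ^ Suc t * (1 - q) ^ (Suc k - Suc t) * real (Suc t))"
    by (subst sum.shift_bounds_cl_Suc_ivl[symmetric]) simp
  also have "\<dots> = (\<Sum>t=0..k. real (Suc k) * q * (real (k choose t) * q ^ t * (1 - q) ^ (k - t)))"
  proof (intro sum.cong refl)
    fix t assume "t \<in> {0..k}"
    have "real (Suc k choose Suc t) * real (Suc t) = real (Suc k) * real (k choose t)"
      using Suc_times_binomial_eq[of k t] by (metis of_nat_mult)
    note eq = this
    have "real (Suc k choose Suc t) * q ^ Suc t * (1 - q) ^ (Suc k - Suc t) * real (Suc t) =
       (real (Suc k choose Suc t) * real (Suc t)) * (q * (q ^ t * (1 - q) ^ (k - t)))"
      by (simp only: power_Suc diff_Suc_Suc mult_ac)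
    also have "\<dots> = (real (Suc k) * real (k choose t)) * (q * (q ^ t * (1 - q) ^ (k - t)))"
      by (simp only: eq)
    also have "\<dots> = real (Suc k) * q * (real (k choose t) * q ^ t * (1 - q) ^ (k - t))"
      by (simp only: mult_ac)
    finally show "real (Suc k choose Suc t) * q ^ Suc t * (1 - q) ^ (Suc k - Suc t) * real (Suc t) =
         real (Suc k) * q * (real (k choose t) * q ^ t * (1 - q) ^ (k - t))" .
  qed
  also have "\<dots> = real (Suc k) * q * (q + (1 - q)) ^ k"
    unfolding binomial_ring atMost_atLeast0 by (simp add: sum_distrib_left)
  finally show ?thesis using Suc by simp
qed



lemma antitone_chain:
  fixes h :: "nat \<Rightarrow> real"
  assumes "\<And>s. s < m \<Longrightarrow> h (Suc s) \<le> h s"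
  shows "t \<le> s \<Longrightarrow> s \<le> m \<Longrightarrow> h s \<le> h t"
proof (induction s)
  case 0 then show ?case by simp
next
  case (Suc s)
  show ?case
  proof (cases "t = Suc s")
    case True then show ?thesis by simp
  next
    case False
    then have "t \<le> s" using Suc.prems by simp
    then have "h s \<le> h t" using Suc by simp
    moreover have "h (Suc s) \<le> h s" using assms Suc.prems by simp
    ultimately show ?thesis by simp
  qed
qed

lemma group_by_card:
  fixes F :: "'a set \<Rightarrow> real"
  assumes fin: "finite U"
  shows "(\<Sum>A\<in>{A. A \<subseteq> U \<and> A \<noteq> {}}. F A) = (\<Sum>s=1..card U. \<Sum>A\<in>{A. A \<subseteq> U \<and> card A = s}. F A)"
proof -
  have fP: "finite {A. A \<subseteq> U \<and> A \<noteq> {}}" using fin by (auto intro: finite_subset[of _ "Pow U"])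
  have img: "card ` {A. A \<subseteq> U \<and> A \<noteq> {}} \<subseteq> {1..card U}"
    using fin by (auto simp: card_mono Suc_le_eq card_gt_0_iff finite_subset)
  have "(\<Sum>A\<in>{A. A \<subseteq> U \<and> A \<noteq> {}}. F A) = (\<Sum>s=1..card U. \<Sum>A\<in>{x\<in>{A. A \<subseteq> U \<and> A \<noteq> {}}. card x = s}. F A)"
    using sum.group[OF fP _ img, of F] by simp
  also have "\<dots> = (\<Sum>s=1..card U. \<Sum>A\<in>{A. A \<subseteq> U \<and> card A = s}. F A)"
    by (intro sum.cong refl arg_cong[where f="sum F"]) auto
  finally show ?thesis .
qed

lemma core_ineq:
  fixes H :: "'a set \<Rightarrow> real" and q :: real
  assumes fin: "finite U"
    and dec: "\<And>A A'. A \<subseteq> A' \<Longrightarrow> A' \<subseteq> U \<Longrightarrow> H A' \<le> H A"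
    and q: "0 \<le> q" "q \<le> 1"
  shows "(\<Sum>A\<in>{A. A \<subseteq> U \<and> A \<noteq> {}}. q ^ card A * (1 - q) ^ (card U - card A) * H A * real (card A))
           * (1 - (1 - q) ^ card U)
         \<le> (\<Sum>A\<in>{A. A \<subseteq> U \<and> A \<noteq> {}}. q ^ card A * (1 - q) ^ (card U - card A) * H A)
           * (real (card U) * q)"
proof -
  define m where "m = card U"
  define T where "T s = (\<Sum>A\<in>{A. A \<subseteq> U \<and> card A = s}. H A)" for s
  define h where "h s = T s / real (m choose s)" for s
  define u where "u s = real (m choose s) * (q ^ s * (1 - q) ^ (m - s))" for s
  have Th: "T s = real (m choose s) * h s" if "s \<le> m" for s
    using that by (simp add: h_def)
  have hstep: "h (Suc s) \<le> h s" if sm: "s < m" for s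
  proof -
    have lv: "real (Suc s) * T (Suc s) \<le> real (m - s) * T s"
      unfolding T_def using level_dec[OF fin dec, where s=s] sm by (simp add: m_def)
    have bin: "real (m choose Suc s) * real (Suc s) = real (m choose s) * real (m - s)"
    proof -
      obtain m' where m': "m = Suc m'" using sm by (cases m) auto
      have "(Suc s) * (m choose Suc s) = m * (m' choose s)" using Suc_times_binomial[of s m'] m' by simp
      also have "\<dots> = (m - s) * (m choose s)" using binomial_absorb_comp[of m s] m' by simp
      finally have e: "(Suc s) * (m choose Suc s) = (m - s) * (m choose s)" .
      have "real (Suc s * (m choose Suc s)) = real ((m - s) * (m choose s))" by (simp only: e)
      then show ?thesis by (simp only: of_nat_mult mult.commute)
    qed
    have c1: "real (m choose Suc s) > 0" "real (m choose s) > 0" using sm by auto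
    have "h (Suc s) = T (Suc s) / real (m choose Suc s)" by (simp add: h_def)
    also have "\<dots> = real (Suc s) * T (Suc s) / (real (m choose Suc s) * real (Suc s))"
      by simp
    also have "\<dots> \<le> real (m - s) * T s / (real (m choose s) * real (m - s))"
      unfolding bin using lv c1 sm by (intro divide_right_mono) auto
    also have "\<dots> = h s" using sm by (simp add: h_def)
    finally show ?thesis .
  qed
  have hanti: "h s \<le> h t" if "t \<le> s" "s \<le> m" for s t
    using antitone_chain[of m h, OF hstep] that by blast
  have X1: "(\<Sum>A\<in>{A. A \<subseteq> U \<and> A \<noteq> {}}. q ^ card A * (1 - q) ^ (card U - card A) * H A * real (card A))
      = (\<Sum>s=1..m. u s * real s * h s)"
  proof -
    have "(\<Sum>A\<in>{A. A \<subseteq> U \<and> A \<noteq> {}}. q ^ card A * (1 - q) ^ (card U - card A) * H A * real (card A))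
       = (\<Sum>s=1..m. \<Sum>A\<in>{A. A \<subseteq> U \<and> card A = s}. q ^ card A * (1 - q) ^ (card U - card A) * H A * real (card A))"
      unfolding m_def by (rule group_by_card[OF fin])
    also have "\<dots> = (\<Sum>s=1..m. (q ^ s * (1 - q) ^ (m - s) * real s) * T s)"
      unfolding T_def m_def sum_distrib_left by (intro sum.cong refl) (auto simp: mult_ac)
    also have "\<dots> = (\<Sum>s=1..m. u s * real s * h s)"
      by (intro sum.cong refl) (auto simp: Th u_def mult_ac)
    finally show ?thesis .
  qed
  have X2: "(\<Sum>A\<in>{A. A \<subseteq> U \<and> A \<noteq> {}}. q ^ card A * (1 - q) ^ (card U - card A) * H A)
      = (\<Sum>s=1..m. u s * h s)"
  proof -
    have "(\<Sum>A\<in>{A. A \<subseteq> U \<and> A \<noteq> {}}. q ^ card A * (1 - q) ^ (card U - card A) * H A)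
       = (\<Sum>s=1..m. \<Sum>A\<in>{A. A \<subseteq> U \<and> card A = s}. q ^ card A * (1 - q) ^ (card U - card A) * H A)"
      unfolding m_def by (rule group_by_card[OF fin])
    also have "\<dots> = (\<Sum>s=1..m. (q ^ s * (1 - q) ^ (m - s)) * T s)"
      unfolding T_def m_def sum_distrib_left by (intro sum.cong refl) (auto simp: mult_ac)
    also have "\<dots> = (\<Sum>s=1..m. u s * h s)"
      by (intro sum.cong refl) (auto simp: Th u_def mult_ac)
    finally show ?thesis .
  qed
  have Y0: "(\<Sum>s=1..m. u s) = 1 - (1 - q) ^ m"
    using binom_sum1[of m q] by (simp add: u_def mult_ac)
  have Y1: "(\<Sum>s=1..m. u s * real s) = real m * q"
    using binom_sum2[of m q] by (simp add: u_def mult_ac)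
  have ch: "(\<Sum>s\<in>{1..m}. u s * real s * h s) * (\<Sum>s\<in>{1..m}. u s) \<le> (\<Sum>s\<in>{1..m}. u s * real s) * (\<Sum>s\<in>{1..m}. u s * h s)"
  proof (rule chebyshev_sum)
    show "0 \<le> u i" for i using q by (simp add: u_def)
    fix i j assume ij: "i \<in> {1..m}" "j \<in> {1..m}"
    show "(real i - real j) * (h i - h j) \<le> 0"
    proof (cases "i \<le> j")
      case True
      then have "h j \<le> h i" using hanti ij by auto
      then show ?thesis using True by (simp add: mult_nonpos_nonneg)
    next
      case False
      then have "h i \<le> h j" using hanti ij by auto
      then show ?thesis using False by (simp add: mult_nonneg_nonpos)
    qed
  qed
  show ?thesis
  proof -
    from ch have "(\<Sum>s=1..m. u s * real s * h s) * (1 - (1 - q) ^ m) \<le> (real m * q) * (\<Sum>s=1..m. u s * h s)"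
      by (simp only: Y0 Y1)
    then show ?thesis unfolding X1 X2 by (simp add: m_def mult.commute)
  qed
qed



lemma finite_bitstrings: "finite (bitstrings n)"
proof -
  have "bitstrings n \<subseteq> (\<lambda>Y i. i \<in> Y) ` Pow {..<n}"
  proof
    fix y assume "y \<in> bitstrings n"
    then have "y = (\<lambda>i. i \<in> {i. y i})" "{i. y i} \<in> Pow {..<n}"
      by (auto simp: bitstrings_def not_le[symmetric])
    then show "y \<in> (\<lambda>Y i. i \<in> Y) ` Pow {..<n}" by blast
  qed
  then show ?thesis by (rule finite_subset) simp
qed

lemma set_mutate:
  assumes "x \<in> bitstrings n"
  shows "set_pmf (mutate n c x) \<subseteq> bitstrings n"
  using assms set_Pi_pmf_subset[of "{..<n}" False "\<lambda>_. bernoulli_pmf (c / n)"]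
  by (auto simp: mutate_def bitstrings_def)

lemma finite_set_mutate:
  assumes "x \<in> bitstrings n"
  shows "finite (set_pmf (mutate n c x))"
  using set_mutate[OF assms] finite_bitstrings by (rule finite_subset)

lemma pmf_mutate:
  assumes x: "x \<in> bitstrings n" and y: "y \<in> bitstrings n"
    and q: "0 \<le> c / n" "c / n \<le> 1"
  shows "pmf (mutate n c x) y = (\<Prod>i<n. if x i \<noteq> y i then c / n else 1 - c / n)"
proof -
  define \<tau> where "\<tau> = (\<lambda>(fl::nat\<Rightarrow>bool) i. x i \<noteq> fl i)"
  have inj: "inj \<tau>" unfolding \<tau>_def inj_def by (auto simp: fun_eq_iff)
  have yy: "y = \<tau> (\<tau> y)" unfolding \<tau>_def by auto
  have mm: "mutate n c x = map_pmf \<tau> (Pi_pmf {..<n} False (\<lambda>_. bernoulli_pmf (c / n)))"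
    by (simp add: mutate_def \<tau>_def)
  have "pmf (mutate n c x) y = pmf (map_pmf \<tau> (Pi_pmf {..<n} False (\<lambda>_. bernoulli_pmf (c / n)))) (\<tau> (\<tau> y))"
    by (simp only: mm yy[symmetric])
  also have "\<dots> = pmf (Pi_pmf {..<n} False (\<lambda>_. bernoulli_pmf (c / n))) (\<tau> y)"
    by (rule pmf_map_inj'[OF inj])
  also have "\<dots> = (\<Prod>i<n. pmf (bernoulli_pmf (c / n)) (\<tau> y i))"
    using x y by (subst pmf_Pi) (auto simp: \<tau>_def bitstrings_def)
  also have "\<dots> = (\<Prod>i<n. if x i \<noteq> y i then c / n else 1 - c / n)"
    using q by (intro prod.cong refl) (auto simp: \<tau>_def)
  finally show ?thesis .
qed

lemma prod_if_mem:
  fixes a b :: real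
  assumes "finite S" "C \<subseteq> S"
  shows "(\<Prod>i\<in>S. if i \<in> C then a else b) = a ^ card C * b ^ (card S - card C)"
proof -
  have "(\<Prod>i\<in>S. if i \<in> C then a else b) = prod (\<lambda>_. a) (S \<inter> {i. i \<in> C}) * prod (\<lambda>_. b) (S \<inter> - {i. i \<in> C})"
    by (rule prod.If_cases[OF assms(1)])
  also have "S \<inter> {i. i \<in> C} = C" using assms by auto
  also have "S \<inter> - {i. i \<in> C} = S - C" by auto
  finally show ?thesis using assms by (simp add: card_Diff_subset finite_subset)
qed

definition yAB :: "(nat \<Rightarrow> bool) \<Rightarrow> nat set \<Rightarrow> nat set \<Rightarrow> nat \<Rightarrow> bool" where
  "yAB x A B = (\<lambda>i. (x i \<and> i \<notin> A) \<or> i \<in> B)"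

lemma expect_mutate:
  fixes h :: "(nat \<Rightarrow> bool) \<Rightarrow> real"
  assumes x: "x \<in> bitstrings n" and q: "0 \<le> c / n" "c / n \<le> 1"
  defines "O1 \<equiv> {i. i < n \<and> x i}" and "Z1 \<equiv> {i. i < n \<and> \<not> x i}"
  shows "measure_pmf.expectation (mutate n c x) h =
    (\<Sum>A\<in>Pow O1. \<Sum>B\<in>Pow Z1. ((c/n) ^ card A * (1 - c/n) ^ (card O1 - card A)) *
        ((c/n) ^ card B * (1 - c/n) ^ (card Z1 - card B)) * h (yAB x A B))"
proof -
  define q where "q = c / n"
  have fO: "finite O1" and fZ: "finite Z1" by (auto simp: O1_def Z1_def)
  have "measure_pmf.expectation (mutate n c x) h = (\<Sum>y\<in>bitstrings n. h y * pmf (mutate n c x) y)"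
    using set_mutate[OF x] by (intro integral_measure_pmf_real[OF finite_bitstrings]) auto
  also have "\<dots> = (\<Sum>AB\<in>Pow O1 \<times> Pow Z1. h (yAB x (fst AB) (snd AB)) * pmf (mutate n c x) (yAB x (fst AB) (snd AB)))"
  proof (rule sum.reindex_bij_betw[symmetric])
    show "bij_betw (\<lambda>AB. yAB x (fst AB) (snd AB)) (Pow O1 \<times> Pow Z1) (bitstrings n)"
    proof (rule bij_betwI[where g="\<lambda>y. ({i\<in>O1. \<not> y i}, {i\<in>Z1. y i})"])
      show "(\<lambda>AB. yAB x (fst AB) (snd AB)) \<in> Pow O1 \<times> Pow Z1 \<rightarrow> bitstrings n"
        using x by (auto simp: yAB_def bitstrings_def O1_def Z1_def)
      show "(\<lambda>y. ({i \<in> O1. \<not> y i}, {i \<in> Z1. y i})) \<in> bitstrings n \<rightarrow> Pow O1 \<times> Pow Z1" by auto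
      show "({i \<in> O1. \<not> yAB x (fst AB) (snd AB) i}, {i \<in> Z1. yAB x (fst AB) (snd AB) i}) = AB"
        if "AB \<in> Pow O1 \<times> Pow Z1" for AB
        using that by (cases AB) (auto simp: yAB_def O1_def Z1_def)
      show "yAB x (fst ({i \<in> O1. \<not> y i}, {i \<in> Z1. y i})) (snd ({i \<in> O1. \<not> y i}, {i \<in> Z1. y i})) = y"
        if "y \<in> bitstrings n" for y
        using that x by (auto simp: yAB_def O1_def Z1_def bitstrings_def fun_eq_iff not_le[symmetric])
    qed
  qed
  also have "\<dots> = (\<Sum>AB\<in>Pow O1 \<times> Pow Z1. (q ^ card (fst AB) * (1 - q) ^ (card O1 - card (fst AB))) *
        (q ^ card (snd AB) * (1 - q) ^ (card Z1 - card (snd AB))) * h (yAB x (fst AB) (snd AB)))"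
  proof (intro sum.cong refl)
    fix AB assume AB: "AB \<in> Pow O1 \<times> Pow Z1"
    obtain A B where AB': "AB = (A, B)" by (cases AB)
    have AO: "A \<subseteq> O1" and BZ: "B \<subseteq> Z1" using AB AB' by auto
    have yb: "yAB x A B \<in> bitstrings n"
      using x AO BZ by (auto simp: yAB_def bitstrings_def O1_def Z1_def)
    have un: "{..<n} = O1 \<union> Z1" and dj: "O1 \<inter> Z1 = {}" by (auto simp: O1_def Z1_def)
    have "pmf (mutate n c x) (yAB x A B) = (\<Prod>i<n. if x i \<noteq> yAB x A B i then q else 1 - q)"
      by (simp only: q_def pmf_mutate[OF x yb q])
    also have "\<dots> = (\<Prod>i\<in>O1. if i \<in> A then q else 1 - q) * (\<Prod>i\<in>Z1. if i \<in> B then q else 1 - q)"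
      unfolding un using fO fZ dj AO BZ
      by (subst prod.union_disjoint) (auto simp: yAB_def O1_def Z1_def intro!: arg_cong2[where f="(*)"] prod.cong)
    also have "\<dots> = (q ^ card A * (1 - q) ^ (card O1 - card A)) * (q ^ card B * (1 - q) ^ (card Z1 - card B))"
      using prod_if_mem[OF fO AO] prod_if_mem[OF fZ BZ] by simp
    finally show "h (yAB x (fst AB) (snd AB)) * pmf (mutate n c x) (yAB x (fst AB) (snd AB)) =
        (q ^ card (fst AB) * (1 - q) ^ (card O1 - card (fst AB))) *
        (q ^ card (snd AB) * (1 - q) ^ (card Z1 - card (snd AB))) * h (yAB x (fst AB) (snd AB))"
      using AB' by simp
  qed
  also have "\<dots> = (\<Sum>A\<in>Pow O1. \<Sum>B\<in>Pow Z1. (q ^ card A * (1 - q) ^ (card O1 - card A)) *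
        (q ^ card B * (1 - q) ^ (card Z1 - card B)) * h (yAB x A B))"
    by (subst sum.cartesian_product) (simp add: case_prod_beta)
  finally show ?thesis by (simp add: q_def)
qed



lemma yAB_facts:
  assumes "A \<subseteq> {i. i < n \<and> x i}" "B \<subseteq> {i. i < n \<and> \<not> x i}"
  shows "(\<exists>i<n. x i \<and> \<not> yAB x A B i) = (A \<noteq> {})"
    and "{i. i < n \<and> x i \<and> \<not> yAB x A B i} = A"
  using assms by (auto simp: yAB_def)

lemma yAB_bits:
  assumes "x \<in> bitstrings n" "A \<subseteq> {i. i < n \<and> x i}" "B \<subseteq> {i. i < n \<and> \<not> x i}"
  shows "yAB x A B \<in> bitstrings n"
  using assms by (auto simp: yAB_def bitstrings_def)

lemma single_offspring:
  fixes g :: "(nat \<Rightarrow> bool) \<Rightarrow> real"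
  assumes x: "x \<in> bitstrings n" and q: "0 \<le> c / n" "c / n \<le> 1"
    and mono: "\<And>y y'. y \<in> bitstrings n \<Longrightarrow> y' \<in> bitstrings n \<Longrightarrow> (\<forall>i. y' i \<longrightarrow> y i) \<Longrightarrow> g y' \<le> g y"
  shows "measure_pmf.expectation (mutate n c x)
           (\<lambda>y. if \<exists>i<n. x i \<and> \<not> y i then g y * real (card {i. i < n \<and> x i \<and> \<not> y i}) else 0)
         * (1 - (1 - c / n) ^ card {i. i < n \<and> x i})
       \<le> measure_pmf.expectation (mutate n c x) (\<lambda>y. if \<exists>i<n. x i \<and> \<not> y i then g y else 0)
         * (real (card {i. i < n \<and> x i}) * (c / n))"
proof -
  define q where "q = c / n"
  define O1 where "O1 = {i. i < n \<and> x i}"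
  define Z1 where "Z1 = {i. i < n \<and> \<not> x i}"
  define wA where "wA A = q ^ card A * (1 - q) ^ (card O1 - card A)" for A :: "nat set"
  define wB where "wB B = q ^ card B * (1 - q) ^ (card Z1 - card B)" for B :: "nat set"
  define P1 where "P1 = {A. A \<subseteq> O1 \<and> A \<noteq> {}}"
  define S1 where "S1 B = (\<Sum>A\<in>P1. wA A * g (yAB x A B) * real (card A))" for B
  define S2 where "S2 B = (\<Sum>A\<in>P1. wA A * g (yAB x A B))" for B
  have fO: "finite O1" and fZ: "finite Z1" by (auto simp: O1_def Z1_def)
  have q': "0 \<le> q" "q \<le> 1" using q by (auto simp: q_def)
  have wBnn: "0 \<le> wB B" for B using q' by (simp add: wB_def)
  have P1eq: "P1 = {A \<in> Pow O1. A \<noteq> {}}" by (auto simp: P1_def)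
  have filt: "(\<Sum>A\<in>Pow O1. if A \<noteq> {} then F A else 0) = (\<Sum>A\<in>P1. F A)" for F :: "nat set \<Rightarrow> real"
    unfolding P1eq by (rule sum.inter_filter[symmetric]) (simp add: fO)
  have E1: "measure_pmf.expectation (mutate n c x)
           (\<lambda>y. if \<exists>i<n. x i \<and> \<not> y i then g y * real (card {i. i < n \<and> x i \<and> \<not> y i}) else 0)
       = (\<Sum>B\<in>Pow Z1. wB B * S1 B)"
  proof -
    have "measure_pmf.expectation (mutate n c x)
           (\<lambda>y. if \<exists>i<n. x i \<and> \<not> y i then g y * real (card {i. i < n \<and> x i \<and> \<not> y i}) else 0)
       = (\<Sum>A\<in>Pow O1. \<Sum>B\<in>Pow Z1. wA A * wB B *
            (if \<exists>i<n. x i \<and> \<not> yAB x A B i then g (yAB x A B) * real (card {i. i < n \<and> x i \<and> \<not> yAB x A B i}) else 0))"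
      unfolding expect_mutate[OF x q] wA_def wB_def q_def O1_def Z1_def ..
    also have "\<dots> = (\<Sum>A\<in>Pow O1. \<Sum>B\<in>Pow Z1. wB B * (if A \<noteq> {} then wA A * g (yAB x A B) * real (card A) else 0))"
      by (intro sum.cong refl) (auto simp: yAB_facts O1_def Z1_def)
    also have "\<dots> = (\<Sum>B\<in>Pow Z1. \<Sum>A\<in>Pow O1. wB B * (if A \<noteq> {} then wA A * g (yAB x A B) * real (card A) else 0))"
      by (rule sum.swap)
    also have "\<dots> = (\<Sum>B\<in>Pow Z1. wB B * S1 B)"
      unfolding S1_def
      by (intro sum.cong refl) (simp only: sum_distrib_left[symmetric] filt)
    finally show ?thesis .
  qed
  have E2: "measure_pmf.expectation (mutate n c x) (\<lambda>y. if \<exists>i<n. x i \<and> \<not> y i then g y else 0)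
       = (\<Sum>B\<in>Pow Z1. wB B * S2 B)"
  proof -
    have "measure_pmf.expectation (mutate n c x) (\<lambda>y. if \<exists>i<n. x i \<and> \<not> y i then g y else 0)
       = (\<Sum>A\<in>Pow O1. \<Sum>B\<in>Pow Z1. wA A * wB B *
            (if \<exists>i<n. x i \<and> \<not> yAB x A B i then g (yAB x A B) else 0))"
      unfolding expect_mutate[OF x q] wA_def wB_def q_def O1_def Z1_def ..
    also have "\<dots> = (\<Sum>A\<in>Pow O1. \<Sum>B\<in>Pow Z1. wB B * (if A \<noteq> {} then wA A * g (yAB x A B) else 0))"
      by (intro sum.cong refl) (auto simp: yAB_facts O1_def Z1_def)
    also have "\<dots> = (\<Sum>B\<in>Pow Z1. \<Sum>A\<in>Pow O1. wB B * (if A \<noteq> {} then wA A * g (yAB x A B) else 0))"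
      by (rule sum.swap)
    also have "\<dots> = (\<Sum>B\<in>Pow Z1. wB B * S2 B)"
      unfolding S2_def
      by (intro sum.cong refl) (simp only: sum_distrib_left[symmetric] filt)
    finally show ?thesis .
  qed
  have core: "S1 B * (1 - (1 - q) ^ card O1) \<le> S2 B * (real (card O1) * q)" if B: "B \<in> Pow Z1" for B
  proof -
    have "(\<Sum>A\<in>{A. A \<subseteq> O1 \<and> A \<noteq> {}}. q ^ card A * (1 - q) ^ (card O1 - card A) * g (yAB x A B) * real (card A))
           * (1 - (1 - q) ^ card O1)
         \<le> (\<Sum>A\<in>{A. A \<subseteq> O1 \<and> A \<noteq> {}}. q ^ card A * (1 - q) ^ (card O1 - card A) * g (yAB x A B))
           * (real (card O1) * q)"
    proof (rule core_ineq[OF fO _ q'])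
      fix A A' assume AA: "A \<subseteq> A'" "A' \<subseteq> O1"
      show "g (yAB x A' B) \<le> g (yAB x A B)"
      proof (rule mono)
        show "yAB x A B \<in> bitstrings n" using AA B x by (intro yAB_bits) (auto simp: O1_def Z1_def)
        show "yAB x A' B \<in> bitstrings n" using AA B x by (intro yAB_bits) (auto simp: O1_def Z1_def)
        show "\<forall>i. yAB x A' B i \<longrightarrow> yAB x A B i" using AA by (auto simp: yAB_def)
      qed
    qed
    then show ?thesis by (simp add: S1_def S2_def P1_def wA_def)
  qed
  have "(\<Sum>B\<in>Pow Z1. wB B * S1 B) * (1 - (1 - q) ^ card O1) = (\<Sum>B\<in>Pow Z1. wB B * (S1 B * (1 - (1 - q) ^ card O1)))"
    by (simp add: sum_distrib_right mult.assoc)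
  also have "\<dots> \<le> (\<Sum>B\<in>Pow Z1. wB B * (S2 B * (real (card O1) * q)))"
    by (intro sum_mono mult_left_mono core wBnn)
  also have "\<dots> = (\<Sum>B\<in>Pow Z1. wB B * S2 B) * (real (card O1) * q)"
    by (simp add: sum_distrib_right mult.assoc)
  finally show ?thesis unfolding E1 E2 by (simp add: q_def O1_def)
qed



lemma expectation_bind_finite:
  fixes F :: "'b \<Rightarrow> real"
  assumes fp: "finite (set_pmf p)" and fq: "\<And>a. a \<in> set_pmf p \<Longrightarrow> finite (set_pmf (q a))"
  shows "measure_pmf.expectation (bind_pmf p q) F = measure_pmf.expectation p (\<lambda>a. measure_pmf.expectation (q a) F)"
proof -
  define S where "S = (\<Union>a\<in>set_pmf p. set_pmf (q a))"
  have fS: "finite S" using fp fq by (auto simp: S_def)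
  have "measure_pmf.expectation (bind_pmf p q) F = (\<Sum>z\<in>S. F z * pmf (bind_pmf p q) z)"
    by (rule integral_measure_pmf_real[OF fS]) (auto simp: S_def)
  also have "\<dots> = (\<Sum>z\<in>S. F z * (\<Sum>a\<in>set_pmf p. pmf (q a) z * pmf p a))"
  proof (intro sum.cong refl arg_cong2[where f="(*)"])
    fix z
    show "pmf (bind_pmf p q) z = (\<Sum>a\<in>set_pmf p. pmf (q a) z * pmf p a)"
      unfolding pmf_bind by (rule integral_measure_pmf_real[OF fp]) auto
  qed
  also have "\<dots> = (\<Sum>a\<in>set_pmf p. (\<Sum>z\<in>S. F z * pmf (q a) z) * pmf p a)"
    by (simp add: sum_distrib_left sum_distrib_right mult_ac sum.swap[of _ S])
  also have "\<dots> = (\<Sum>a\<in>set_pmf p. measure_pmf.expectation (q a) F * pmf p a)"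
  proof (intro sum.cong refl arg_cong2[where f="(*)"])
    fix a assume a: "a \<in> set_pmf p"
    show "(\<Sum>z\<in>S. F z * pmf (q a) z) = measure_pmf.expectation (q a) F"
      using a by (intro integral_measure_pmf_real[OF fS, symmetric]) (auto simp: S_def)
  qed
  also have "\<dots> = measure_pmf.expectation p (\<lambda>a. measure_pmf.expectation (q a) F)"
    by (rule integral_measure_pmf_real[OF fp, symmetric]) auto
  finally show ?thesis .
qed

lemma expectation_swap_finite:
  fixes F :: "'a \<Rightarrow> 'b \<Rightarrow> real"
  assumes fp: "finite (set_pmf p)" and fq: "finite (set_pmf q)"
  shows "measure_pmf.expectation p (\<lambda>a. measure_pmf.expectation q (\<lambda>b. F a b))
       = measure_pmf.expectation q (\<lambda>b. measure_pmf.expectation p (\<lambda>a. F a b))"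
proof -
  have "measure_pmf.expectation p (\<lambda>a. measure_pmf.expectation q (\<lambda>b. F a b))
     = (\<Sum>a\<in>set_pmf p. (\<Sum>b\<in>set_pmf q. F a b * pmf q b) * pmf p a)"
    by (subst integral_measure_pmf_real[OF fp], simp, intro sum.cong refl arg_cong2[where f="(*)"])
       (rule integral_measure_pmf_real[OF fq], simp)
  also have "\<dots> = (\<Sum>b\<in>set_pmf q. (\<Sum>a\<in>set_pmf p. F a b * pmf p a) * pmf q b)"
    by (simp add: sum_distrib_left sum_distrib_right mult_ac sum.swap[of _ "set_pmf q"])
  also have "\<dots> = measure_pmf.expectation q (\<lambda>b. measure_pmf.expectation p (\<lambda>a. F a b))"
    by (subst integral_measure_pmf_real[OF fq], simp, intro sum.cong refl arg_cong2[where f="(*)"])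
       (rule integral_measure_pmf_real[OF fp, symmetric], simp)
  finally show ?thesis .
qed

lemma expectation_return: "measure_pmf.expectation (return_pmf a) F = (F a :: real)"
  by simp

definition Wset :: "((nat \<Rightarrow> bool) \<Rightarrow> real) \<Rightarrow> nat \<Rightarrow> (nat \<Rightarrow> nat \<Rightarrow> bool) \<Rightarrow> nat set" where
  "Wset f K ys = {j. j < K \<and> (\<forall>j'<K. f (ys j') \<le> f (ys j))}"

definition piw :: "((nat \<Rightarrow> bool) \<Rightarrow> real) \<Rightarrow> nat \<Rightarrow> nat \<Rightarrow> (nat \<Rightarrow> nat \<Rightarrow> bool) \<Rightarrow> real" where
  "piw f K j ys = (if j \<in> Wset f K ys then 1 / real (card (Wset f K ys)) else 0)"

lemma Wset_sub: "Wset f K ys \<subseteq> {..<K}" by (auto simp: Wset_def)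
lemma Wset_fin: "finite (Wset f K ys)" using Wset_sub by (rule finite_subset) simp

lemma Wset_ne: assumes "0 < K" shows "Wset f K ys \<noteq> {}"
proof -
  have ne: "(\<lambda>j. f (ys j)) ` {..<K} \<noteq> {}" using assms by auto
  have "Max ((\<lambda>j. f (ys j)) ` {..<K}) \<in> (\<lambda>j. f (ys j)) ` {..<K}" using ne by (intro Max_in) auto
  then obtain j where j: "j < K" "f (ys j) = Max ((\<lambda>j. f (ys j)) ` {..<K})" by auto
  have "\<forall>j'<K. f (ys j') \<le> f (ys j)" unfolding j(2) by (auto intro: Max_ge)
  then have "j \<in> Wset f K ys" using j by (auto simp: Wset_def)
  then show ?thesis by auto
qed

lemma piw_nonneg: "0 \<le> piw f K j ys" by (simp add: piw_def)

lemma sum_piw_weighted: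
  fixes L :: "nat \<Rightarrow> real"
  shows "(\<Sum>j\<in>Wset f K ys. L j) / real (card (Wset f K ys)) = (\<Sum>j<K. piw f K j ys * L j)"
proof -
  have "(\<Sum>j<K. piw f K j ys * L j) = (\<Sum>j<K. if j \<in> Wset f K ys then L j / real (card (Wset f K ys)) else 0)"
    by (intro sum.cong refl) (simp add: piw_def)
  also have "\<dots> = (\<Sum>j\<in>{..<K} \<inter> Wset f K ys. L j / real (card (Wset f K ys)))"
    by (simp add: sum.If_cases)
  also have "{..<K} \<inter> Wset f K ys = Wset f K ys" using Wset_sub by blast
  finally show ?thesis by (simp add: sum_divide_distrib)
qed

lemma sum_piw: assumes "0 < K" shows "(\<Sum>j<K. piw f K j ys) = 1"
proof -
  have "(\<Sum>j<K. piw f K j ys) = (\<Sum>j\<in>Wset f K ys. 1) / real (card (Wset f K ys))"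
    using sum_piw_weighted[where f=f and K=K and ys=ys and L="\<lambda>_. 1"] by simp
  also have "\<dots> = 1" using Wset_ne[OF assms] Wset_fin by simp
  finally show ?thesis .
qed

lemma piw_mono:
  assumes mono: "monotone_bitfun n f" and j: "j < K"
    and y: "y \<in> bitstrings n" and y': "y' \<in> bitstrings n" and le: "\<forall>i. y' i \<longrightarrow> y i"
  shows "piw f K j (zs(j := y')) \<le> piw f K j (zs(j := y))"
proof (cases "y' = y")
  case True then show ?thesis by simp
next
  case False
  have ne: "y \<noteq> y'" using False by auto
  have lt: "f y' < f y" using mono y y' le ne unfolding monotone_bitfun_def by blast
  show ?thesis
  proof (cases "j \<in> Wset f K (zs(j := y'))")
    case False then show ?thesis by (simp add: piw_def)
  next
    case True
    then have all: "\<forall>j'<K. f ((zs(j := y')) j') \<le> f y'" by (simp add: Wset_def)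
    have W1: "Wset f K (zs(j := y)) = {j}"
    proof
      show "Wset f K (zs(j := y)) \<subseteq> {j}"
      proof
        fix j' assume "j' \<in> Wset f K (zs(j := y))"
        then have "j' < K" "f ((zs(j := y)) j') \<ge> f y" using j by (auto simp: Wset_def)
        note jj = this
        show "j' \<in> {j}"
        proof (rule ccontr)
          assume "j' \<notin> {j}"
          then have nj: "j' \<noteq> j" by simp
          have "f ((zs(j := y')) j') \<le> f y'" using all jj(1) by blast
          then have "f (zs j') \<le> f y'" using nj by simp
          moreover have "f (zs j') \<ge> f y" using jj(2) nj by simp
          ultimately show False using lt by linarith
        qed
      qed
      show "{j} \<subseteq> Wset f K (zs(j := y))"
        using j all lt by (auto simp: Wset_def)
    qed
    have c0: "1 \<le> real (card (Wset f K (zs(j := y'))))"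
      using True Wset_fin[of f K "zs(j := y')"] card_gt_0_iff[of "Wset f K (zs(j := y'))"] by auto
    have "piw f K j (zs(j := y')) \<le> 1"
      using True c0 by (simp add: piw_def)
    also have "1 = piw f K j (zs(j := y))" using W1 by (simp add: piw_def)
    finally show ?thesis .
  qed
qed



definition Nb :: "nat \<Rightarrow> (nat \<Rightarrow> bool) \<Rightarrow> (nat \<Rightarrow> bool) \<Rightarrow> bool" where
  "Nb n x y = (\<exists>i<n. x i \<and> \<not> y i)"
definition lossb :: "nat \<Rightarrow> (nat \<Rightarrow> bool) \<Rightarrow> (nat \<Rightarrow> bool) \<Rightarrow> real" where
  "lossb n x y = real (card {i. i < n \<and> x i \<and> \<not> y i})"

lemma finite_set_Pi_mutate:
  assumes x: "x \<in> bitstrings n" and R: "finite R"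
  shows "finite (set_pmf (Pi_pmf R dflt (\<lambda>_. mutate n c x)))"
proof (rule finite_subset[OF set_Pi_pmf_subset'[OF R]])
  show "finite (PiE_dflt R dflt (set_pmf \<circ> (\<lambda>_. mutate n c x)))"
    using finite_set_mutate[OF x] R by (intro finite_PiE_dflt) auto
qed

lemma expectation_Pi_split:
  fixes \<Phi> :: "(nat \<Rightarrow> nat \<Rightarrow> bool) \<Rightarrow> real"
  assumes x: "x \<in> bitstrings n" and j: "j < K"
  shows "measure_pmf.expectation (Pi_pmf {..<K} (\<lambda>_. False) (\<lambda>_. mutate n c x)) \<Phi>
    = measure_pmf.expectation (Pi_pmf ({..<K} - {j}) (\<lambda>_. False) (\<lambda>_. mutate n c x))
        (\<lambda>zs. measure_pmf.expectation (mutate n c x) (\<lambda>y. \<Phi> (zs(j := y))))"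
proof -
  define M where "M = mutate n c x"
  define Q where "Q = Pi_pmf ({..<K} - {j}) (\<lambda>_. False) (\<lambda>_. M)"
  have ins: "{..<K} = insert j ({..<K} - {j})" using j by auto
  have fM: "finite (set_pmf M)" unfolding M_def by (rule finite_set_mutate[OF x])
  have fQ: "finite (set_pmf Q)" unfolding Q_def M_def by (rule finite_set_Pi_mutate[OF x]) simp
  have "Pi_pmf {..<K} (\<lambda>_. False) (\<lambda>_. M) = do {y \<leftarrow> M; zs \<leftarrow> Q; return_pmf (zs(j := y))}"
    unfolding Q_def by (subst ins, subst Pi_pmf_insert') auto
  then have "measure_pmf.expectation (Pi_pmf {..<K} (\<lambda>_. False) (\<lambda>_. M)) \<Phi>
     = measure_pmf.expectation M (\<lambda>y. measure_pmf.expectation Q (\<lambda>zs. \<Phi> (zs(j := y))))"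
    using fM fQ by (simp add: expectation_bind_finite)
  also have "\<dots> = measure_pmf.expectation Q (\<lambda>zs. measure_pmf.expectation M (\<lambda>y. \<Phi> (zs(j := y))))"
    by (rule expectation_swap_finite[OF fM fQ])
  finally show ?thesis unfolding M_def Q_def .
qed

lemma per_j:
  assumes x: "x \<in> bitstrings n" and q: "0 \<le> c / n" "c / n \<le> 1"
    and mono: "monotone_bitfun n f" and j: "j < K"
  shows "measure_pmf.expectation (Pi_pmf {..<K} (\<lambda>_. False) (\<lambda>_. mutate n c x))
           (\<lambda>ys. if \<forall>j'<K. Nb n x (ys j') then piw f K j ys * lossb n x (ys j) else 0)
         * (1 - (1 - c / n) ^ card {i. i < n \<and> x i})
       \<le> measure_pmf.expectation (Pi_pmf {..<K} (\<lambda>_. False) (\<lambda>_. mutate n c x))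
           (\<lambda>ys. if \<forall>j'<K. Nb n x (ys j') then piw f K j ys else 0)
         * (real (card {i. i < n \<and> x i}) * (c / n))"
proof -
  define M where "M = mutate n c x"
  define Q where "Q = Pi_pmf ({..<K} - {j}) (\<lambda>_. False) (\<lambda>_. M)"
  define D where "D = 1 - (1 - c / n) ^ card {i. i < n \<and> x i}"
  define Nq where "Nq = real (card {i. i < n \<and> x i}) * (c / n)"
  have fM: "finite (set_pmf M)" unfolding M_def by (rule finite_set_mutate[OF x])
  have fQ: "finite (set_pmf Q)" unfolding Q_def M_def by (rule finite_set_Pi_mutate[OF x]) simp
  define g where "g zs y = (if \<forall>j'<K. j' \<noteq> j \<longrightarrow> Nb n x (zs j') then piw f K j (zs(j := y)) else 0)" for zs y
  have split: "(\<forall>j'<K. Nb n x ((zs(j := y)) j')) = (Nb n x y \<and> (\<forall>j'<K. j' \<noteq> j \<longrightarrow> Nb n x (zs j')))" for zs y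
    using j by auto
  have inner: "measure_pmf.expectation M
            (\<lambda>y. if \<forall>j'<K. Nb n x ((zs(j := y)) j') then piw f K j (zs(j := y)) * lossb n x ((zs(j := y)) j) else 0) * D
        \<le> measure_pmf.expectation M
            (\<lambda>y. if \<forall>j'<K. Nb n x ((zs(j := y)) j') then piw f K j (zs(j := y)) else 0) * Nq" for zs
  proof -
    have e1: "(\<lambda>y. if \<forall>j'<K. Nb n x ((zs(j := y)) j') then piw f K j (zs(j := y)) * lossb n x ((zs(j := y)) j) else 0)
       = (\<lambda>y. if \<exists>i<n. x i \<and> \<not> y i then g zs y * real (card {i. i < n \<and> x i \<and> \<not> y i}) else 0)"
      using j by (auto simp: split g_def Nb_def lossb_def fun_eq_iff)
    have e2: "(\<lambda>y. if \<forall>j'<K. Nb n x ((zs(j := y)) j') then piw f K j (zs(j := y)) else 0)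
       = (\<lambda>y. if \<exists>i<n. x i \<and> \<not> y i then g zs y else 0)"
      using j by (auto simp: split g_def Nb_def fun_eq_iff)
    show ?thesis unfolding e1 e2 M_def D_def Nq_def
    proof (rule single_offspring[OF x q])
      fix y y' assume yy: "y \<in> bitstrings n" "y' \<in> bitstrings n" "\<forall>i. y' i \<longrightarrow> y i"
      show "g zs y' \<le> g zs y"
        using piw_mono[OF mono j yy, of zs] by (auto simp: g_def)
    qed
  qed
  have intQ: "integrable Q F" for F :: "_ \<Rightarrow> real" by (rule integrable_measure_pmf_finite[OF fQ])
  have "measure_pmf.expectation (Pi_pmf {..<K} (\<lambda>_. False) (\<lambda>_. M))
           (\<lambda>ys. if \<forall>j'<K. Nb n x (ys j') then piw f K j ys * lossb n x (ys j) else 0) * D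
     = measure_pmf.expectation Q (\<lambda>zs. measure_pmf.expectation M
            (\<lambda>y. if \<forall>j'<K. Nb n x ((zs(j := y)) j') then piw f K j (zs(j := y)) * lossb n x ((zs(j := y)) j) else 0) * D)"
    unfolding M_def Q_def by (subst expectation_Pi_split[OF x j]) simp
  also have "\<dots> \<le> measure_pmf.expectation Q (\<lambda>zs. measure_pmf.expectation M
            (\<lambda>y. if \<forall>j'<K. Nb n x ((zs(j := y)) j') then piw f K j (zs(j := y)) else 0) * Nq)"
    by (rule integral_mono[OF intQ intQ inner])
  also have "\<dots> = measure_pmf.expectation (Pi_pmf {..<K} (\<lambda>_. False) (\<lambda>_. M))
           (\<lambda>ys. if \<forall>j'<K. Nb n x (ys j') then piw f K j ys else 0) * Nq"
    unfolding M_def Q_def by (subst expectation_Pi_split[OF x j]) simp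
  finally show ?thesis unfolding M_def D_def Nq_def .
qed



lemma expectation_cond_finite:
  fixes h :: "'a \<Rightarrow> real"
  assumes fp: "finite (set_pmf p)" and ne: "set_pmf p \<inter> A \<noteq> {}"
  shows "measure_pmf.expectation (cond_pmf p A) h
       = measure_pmf.expectation p (\<lambda>z. indicator A z * h z) / measure_pmf.prob p A"
proof -
  have "measure_pmf.expectation (cond_pmf p A) h = (\<Sum>z\<in>set_pmf p. h z * pmf (cond_pmf p A) z)"
    by (rule integral_measure_pmf_real[OF fp]) (use ne in auto)
  also have "\<dots> = (\<Sum>z\<in>set_pmf p. indicator A z * h z * pmf p z) / measure_pmf.prob p A"
    unfolding sum_divide_distrib by (intro sum.cong refl) (simp add: pmf_cond[OF ne] indicator_def)
  also have "(\<Sum>z\<in>set_pmf p. indicator A z * h z * pmf p z) = measure_pmf.expectation p (\<lambda>z. indicator A z * h z)"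
    by (rule integral_measure_pmf_real[OF fp, symmetric]) auto
  finally show ?thesis .
qed

lemma prob_as_expectation: "measure_pmf.prob p A = measure_pmf.expectation p (indicator A :: _ \<Rightarrow> real)"
  by simp

lemma ratio_mono:
  fixes u v :: real
  assumes u: "0 < u" and uv: "u \<le> v"
  shows "u / (1 - exp (- u)) \<le> v / (1 - exp (- v))"
proof -
  have v: "0 < v" using u uv by simp
  define t where "t = u / v"
  have t: "0 \<le> t" "t \<le> 1" using u v uv by (auto simp: t_def)
  have "exp ((1 - t) *\<^sub>R 0 + t *\<^sub>R (- v)) \<le> (1 - t) * exp 0 + t * exp (- v)"
    by (rule convex_onD[OF exp_convex t]) auto
  moreover have "(1 - t) *\<^sub>R 0 + t *\<^sub>R (- v) = - u" using v by (simp add: t_def)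
  ultimately have e: "exp (- u) \<le> (1 - t) + t * exp (- v)" by simp
  have pv: "0 < 1 - exp (- v)" using v by simp
  have pu: "0 < 1 - exp (- u)" using u by simp
  have le: "t * (1 - exp (- v)) \<le> 1 - exp (- u)" using e by (simp add: algebra_simps)
  have "u / (1 - exp (- u)) \<le> u / (t * (1 - exp (- v)))"
    using le u t pv pu by (intro divide_left_mono) (auto simp: t_def v intro!: mult_pos_pos)
  also have "\<dots> = v / (1 - exp (- v))" using u v by (simp add: t_def field_simps)
  finally show ?thesis .
qed

lemma bound_const:
  fixes c :: real and m n :: nat
  assumes c: "0 < c" "c \<le> real n" and m: "1 \<le> m" "m < n"
  shows "0 < 1 - (1 - c / n) ^ m"
    and "real m * (c / n) / (1 - (1 - c / n) ^ m) \<le> c / (1 - exp (- c))"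
proof -
  have n: "0 < real n" using m by simp
  define q where "q = c / n"
  have q: "0 < q" "q \<le> 1" using c n by (auto simp: q_def)
  have "(1 - q) ^ m \<le> exp (- q) ^ m"
    using q exp_ge_add_one_self[of "- q"] by (intro power_mono) auto
  also have "\<dots> = exp (- (real m * q))" by (simp add: exp_of_nat_mult[symmetric])
  finally have pw: "(1 - q) ^ m \<le> exp (- (real m * q))" .
  have mq: "0 < real m * q" using m q by simp
  have pd: "0 < 1 - exp (- (real m * q))" using mq by simp
  have lt1: "(1 - q) ^ m < 1" using pw pd by linarith
  show D: "0 < 1 - (1 - c / n) ^ m" using lt1 unfolding q_def by linarith
  have mqc: "real m * q \<le> c"
  proof -
    have "real m * q \<le> real n * q" using m q by (intro mult_right_mono) auto
    also have "\<dots> = c" using n by (simp add: q_def)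
    finally show ?thesis .
  qed
  have "real m * q / (1 - (1 - q) ^ m) \<le> real m * q / (1 - exp (- (real m * q)))"
    using pw pd mq lt1 by (intro divide_left_mono) (auto intro!: mult_pos_pos)
  also have "\<dots> \<le> c / (1 - exp (- c))" by (rule ratio_mono[OF mq mqc])
  finally show "real m * (c / n) / (1 - (1 - c / n) ^ m) \<le> c / (1 - exp (- c))" by (simp add: q_def)
qed



lemma zeros_diff_ge:
  "real (zeros n x) - real (zeros n x') \<ge> - lossb n x x'"
proof -
  have "{i. i < n \<and> \<not> x' i} \<subseteq> {i. i < n \<and> \<not> x i} \<union> {i. i < n \<and> x i \<and> \<not> x' i}" by auto
  then have "card {i. i < n \<and> \<not> x' i} \<le> card ({i. i < n \<and> \<not> x i} \<union> {i. i < n \<and> x i \<and> \<not> x' i})"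
    by (intro card_mono) auto
  also have "\<dots> \<le> card {i. i < n \<and> \<not> x i} + card {i. i < n \<and> x i \<and> \<not> x' i}"
    by (rule card_Un_le)
  finally show ?thesis unfolding zeros_def lossb_def by linarith
qed

lemma lossb_nonneg: "0 \<le> lossb n x y" by (simp add: lossb_def)

theorem mainTheorem9:
  fixes n :: nat and c s F lam :: real
    and f :: "(nat \<Rightarrow> bool) \<Rightarrow> real" and x :: "nat \<Rightarrow> bool"
  assumes "c > 0" and "s > 0" and "F > 1"
    and "c \<le> real n"
    and "monotone_bitfun n f"
    and "x \<in> bitstrings n"
    and "lam \<ge> 1"
    and "zeros n x > 0"
    and "zeros n x < n"
  shows "measure_pmf.expectation
           (cond_pmf (generation n c f x lam) (event_notA n x lam))
           (\<lambda>(ys, x'). real (zeros n x) - real (zeros n x'))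
         \<ge> - c / (1 - exp (- c))
       \<and> measure_pmf.expectation
           (cond_pmf (generation n c f x lam) (event_notA n x lam))
           (\<lambda>(ys, x'). min 1 (real (zeros n x) - real (zeros n x')))
         \<ge> - c / (1 - exp (- c))"
proof -
  note c = assms(1) and cn = assms(4) and mono = assms(5) and x = assms(6) and lam = assms(7)
    and z0 = assms(8) and zn = assms(9)
  define K where "K = num_offspring lam"
  have K: "0 < K"
  proof -
    have "round (1::real) \<le> round lam" using lam by (rule round_mono)
    then show ?thesis by (simp add: K_def num_offspring_def)
  qed
  have npos: "0 < real n" using c cn by linarith
  have q: "0 \<le> c / n" "c / n \<le> 1" using c cn npos by auto
  define M where "M = mutate n c x"
  define P where "P = Pi_pmf {..<K} (\<lambda>_. False) (\<lambda>_. M)"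
  define O1 where "O1 = {i. i < n \<and> x i}"
  define m where "m = card O1"
  have part: "m + zeros n x = n"
  proof -
    have "{..<n} = O1 \<union> {i. i < n \<and> \<not> x i}" "O1 \<inter> {i. i < n \<and> \<not> x i} = {}" by (auto simp: O1_def)
    then have "card {..<n} = card O1 + card {i. i < n \<and> \<not> x i}"
      by (metis (no_types, lifting) card_Un_disjoint finite_Un finite_lessThan)
    then show ?thesis by (simp add: m_def zeros_def)
  qed
  have m1: "1 \<le> m" and mn: "m < n" using part z0 zn by auto
  define EA where "EA ys = (\<forall>j<K. Nb n x (ys j))" for ys :: "nat \<Rightarrow> nat \<Rightarrow> bool"
  define G where "G = generation n c f x lam"
  define A where "A = event_notA n x lam"
  have Geq: "G = bind_pmf P (\<lambda>ys. bind_pmf (pmf_of_set (Wset f K ys)) (\<lambda>j. return_pmf (ys, ys j)))"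
    by (simp add: G_def generation_def Wset_def K_def M_def P_def Let_def)
  have indA: "indicator A (ys, y) = (if EA ys then 1 else (0::real))" for ys y
    by (simp add: A_def event_notA_def EA_def Nb_def K_def indicator_def)
  have fM: "finite (set_pmf M)" unfolding M_def by (rule finite_set_mutate[OF x])
  have fP: "finite (set_pmf P)" unfolding P_def M_def by (rule finite_set_Pi_mutate[OF x]) simp
  have Wne: "Wset f K ys \<noteq> {}" for ys using Wset_ne[OF K] .
  have Wfin: "finite (Wset f K ys)" for ys by (rule Wset_fin)
  have finner: "finite (set_pmf (bind_pmf (pmf_of_set (Wset f K ys)) (\<lambda>j. return_pmf (ys, ys j))))" for ys
    using Wne Wfin by simp
  have fG: "finite (set_pmf G)" unfolding Geq using fP finner by simp
  have EG: "measure_pmf.expectation G H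
      = measure_pmf.expectation P (\<lambda>ys. (\<Sum>j\<in>Wset f K ys. H (ys, ys j)) / real (card (Wset f K ys)))"
    for H :: "((nat \<Rightarrow> nat \<Rightarrow> bool) \<times> (nat \<Rightarrow> bool)) \<Rightarrow> real"
  proof -
    have "measure_pmf.expectation G H = measure_pmf.expectation P
        (\<lambda>ys. measure_pmf.expectation (bind_pmf (pmf_of_set (Wset f K ys)) (\<lambda>j. return_pmf (ys, ys j))) H)"
      unfolding Geq by (rule expectation_bind_finite[OF fP finner])
    also have "\<dots> = measure_pmf.expectation P (\<lambda>ys. (\<Sum>j\<in>Wset f K ys. H (ys, ys j)) / real (card (Wset f K ys)))"
    proof (rule Bochner_Integration.integral_cong[OF refl])
      fix ys
      have "measure_pmf.expectation (bind_pmf (pmf_of_set (Wset f K ys)) (\<lambda>j. return_pmf (ys, ys j))) H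
          = measure_pmf.expectation (pmf_of_set (Wset f K ys)) (\<lambda>j. measure_pmf.expectation (return_pmf (ys, ys j)) H)"
        using Wne Wfin by (intro expectation_bind_finite) auto
      also have "\<dots> = (\<Sum>j\<in>Wset f K ys. H (ys, ys j)) / real (card (Wset f K ys))"
        by (simp add: integral_pmf_of_set[OF Wne Wfin])
      finally show "measure_pmf.expectation (bind_pmf (pmf_of_set (Wset f K ys)) (\<lambda>j. return_pmf (ys, ys j))) H
          = (\<Sum>j\<in>Wset f K ys. H (ys, ys j)) / real (card (Wset f K ys))" .
    qed
    finally show ?thesis .
  qed
  have ne: "set_pmf G \<inter> A \<noteq> {}"
  proof -
    have "O1 \<noteq> {}" using m1 by (auto simp: m_def)
    then obtain i0 where "i0 \<in> O1" by blast
    then have i0: "i0 < n" "x i0" by (auto simp: O1_def)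
    define y0 where "y0 = (if c / n = 1 then (\<lambda>i. i < n \<and> \<not> x i) else x(i0 := False))"
    have y0b: "y0 \<in> bitstrings n" using x by (auto simp: y0_def bitstrings_def)
    have y0N: "Nb n x y0" using i0 by (auto simp: y0_def Nb_def intro!: exI[of _ i0])
    have "pmf M y0 = (\<Prod>i<n. if x i \<noteq> y0 i then c / n else 1 - c / n)"
      unfolding M_def by (rule pmf_mutate[OF x y0b q])
    also have "\<dots> > 0"
    proof (intro prod_pos ballI)
      fix i assume i: "i \<in> {..<n}"
      show "0 < (if x i \<noteq> y0 i then c / n else 1 - c / n)"
        using i c npos q by (cases "c / n = 1") (auto simp: y0_def)
    qed
    finally have y0M: "y0 \<in> set_pmf M" by (simp add: set_pmf_iff)
    define ys0 where "ys0 = (\<lambda>j. if j < K then y0 else (\<lambda>_. False))"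
    have ys0P: "ys0 \<in> set_pmf P"
      unfolding P_def by (subst set_Pi_pmf) (auto simp: PiE_dflt_def ys0_def y0M)
    have w0: "0 \<in> Wset f K ys0" using K by (auto simp: Wset_def ys0_def)
    have "(ys0, ys0 0) \<in> set_pmf G" unfolding Geq using ys0P w0 Wne Wfin by auto
    moreover have "(ys0, ys0 0) \<in> A" using indA[of ys0 "ys0 0"] y0N by (auto simp: EA_def ys0_def indicator_def split: if_splits)
    ultimately show ?thesis by blast
  qed
  define D where "D = 1 - (1 - c / n) ^ m"
  define Nq where "Nq = real m * (c / n)"
  have Dpos: "0 < D" unfolding D_def using bound_const(1)[OF c cn m1 mn] .
  have NqD: "Nq / D \<le> c / (1 - exp (- c))" unfolding D_def Nq_def using bound_const(2)[OF c cn m1 mn] .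
  have intP: "integrable P H" for H :: "_ \<Rightarrow> real" by (rule integrable_measure_pmf_finite[OF fP])
  define E1 where "E1 = measure_pmf.expectation P (\<lambda>ys. if EA ys then (\<Sum>j\<in>Wset f K ys. lossb n x (ys j)) / real (card (Wset f K ys)) else 0)"
  define E0 where "E0 = measure_pmf.expectation P (\<lambda>ys. if EA ys then 1 else (0::real))"
  have E1sum: "E1 = (\<Sum>j<K. measure_pmf.expectation P (\<lambda>ys. if EA ys then piw f K j ys * lossb n x (ys j) else 0))"
  proof -
    have "E1 = measure_pmf.expectation P (\<lambda>ys. \<Sum>j<K. if EA ys then piw f K j ys * lossb n x (ys j) else 0)"
      unfolding E1_def by (rule Bochner_Integration.integral_cong[OF refl]) (simp add: sum_piw_weighted)
    also have "\<dots> = (\<Sum>j<K. measure_pmf.expectation P (\<lambda>ys. if EA ys then piw f K j ys * lossb n x (ys j) else 0))"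
      by (rule Bochner_Integration.integral_sum[OF intP])
    finally show ?thesis .
  qed
  have E0sum: "E0 = (\<Sum>j<K. measure_pmf.expectation P (\<lambda>ys. if EA ys then piw f K j ys else 0))"
  proof -
    have "E0 = measure_pmf.expectation P (\<lambda>ys. \<Sum>j<K. if EA ys then piw f K j ys else 0)"
      unfolding E0_def by (rule Bochner_Integration.integral_cong[OF refl]) (simp add: sum_piw[OF K])
    also have "\<dots> = (\<Sum>j<K. measure_pmf.expectation P (\<lambda>ys. if EA ys then piw f K j ys else 0))"
      by (rule Bochner_Integration.integral_sum[OF intP])
    finally show ?thesis .
  qed
  have E10: "E1 * D \<le> E0 * Nq"
  proof -
    have "E1 * D = (\<Sum>j<K. measure_pmf.expectation P (\<lambda>ys. if EA ys then piw f K j ys * lossb n x (ys j) else 0) * D)"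
      unfolding E1sum by (simp add: sum_distrib_right)
    also have "\<dots> \<le> (\<Sum>j<K. measure_pmf.expectation P (\<lambda>ys. if EA ys then piw f K j ys else 0) * Nq)"
    proof (rule sum_mono)
      fix j assume "j \<in> {..<K}"
      then have j: "j < K" by simp
      show "measure_pmf.expectation P (\<lambda>ys. if EA ys then piw f K j ys * lossb n x (ys j) else 0) * D
          \<le> measure_pmf.expectation P (\<lambda>ys. if EA ys then piw f K j ys else 0) * Nq"
        using per_j[OF x q mono j] unfolding P_def M_def EA_def D_def Nq_def m_def O1_def .
    qed
    also have "\<dots> = E0 * Nq" unfolding E0sum by (simp add: sum_distrib_right)
    finally show ?thesis .
  qed
  have probA: "measure_pmf.prob G A = E0"
  proof -
    have "measure_pmf.prob G A = measure_pmf.expectation G (indicator A)" by simp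
    also have "\<dots> = E0"
      unfolding EG E0_def
    proof (rule Bochner_Integration.integral_cong[OF refl])
      fix ys
      show "(\<Sum>j\<in>Wset f K ys. indicator A (ys, ys j)) / real (card (Wset f K ys)) = (if EA ys then 1 else 0)"
        using Wne[of ys] Wfin[of ys] by (simp add: indA)
    qed
    finally show ?thesis .
  qed
  have E0pos: "0 < E0"
  proof -
    have "measure_pmf.prob G A \<noteq> 0" using ne by (simp add: measure_pmf_zero_iff)
    then show ?thesis using probA by (metis measure_nonneg order_le_less)
  qed
  have condL: "measure_pmf.expectation (cond_pmf G A) (\<lambda>z. lossb n x (snd z)) = E1 / E0"
  proof -
    have "measure_pmf.expectation (cond_pmf G A) (\<lambda>z. lossb n x (snd z))
        = measure_pmf.expectation G (\<lambda>z. indicator A z * lossb n x (snd z)) / measure_pmf.prob G A"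
      by (rule expectation_cond_finite[OF fG ne])
    also have "measure_pmf.expectation G (\<lambda>z. indicator A z * lossb n x (snd z)) = E1"
      unfolding EG E1_def
    proof (rule Bochner_Integration.integral_cong[OF refl])
      fix ys
      show "(\<Sum>j\<in>Wset f K ys. indicator A (ys, ys j) * lossb n x (snd (ys, ys j))) / real (card (Wset f K ys)) =
          (if EA ys then (\<Sum>j\<in>Wset f K ys. lossb n x (ys j)) / real (card (Wset f K ys)) else 0)"
        by (simp add: indA)
    qed
    finally show ?thesis using probA by simp
  qed
  have bound: "measure_pmf.expectation (cond_pmf G A) (\<lambda>z. lossb n x (snd z)) \<le> c / (1 - exp (- c))"
  proof -
    have "E1 / E0 \<le> Nq / D"
      using E10 Dpos E0pos by (simp add: divide_simps mult.commute)
    then show ?thesis using condL NqD by linarith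
  qed
  have fC: "finite (set_pmf (cond_pmf G A))" using fG ne by simp
  have intC: "integrable (cond_pmf G A) H" for H :: "_ \<Rightarrow> real" by (rule integrable_measure_pmf_finite[OF fC])
  have low: "measure_pmf.expectation (cond_pmf G A) H \<ge> - c / (1 - exp (- c))"
    if Hge: "\<And>ys y. H (ys, y) \<ge> - lossb n x y" for H
  proof -
    have "- c / (1 - exp (- c)) \<le> - measure_pmf.expectation (cond_pmf G A) (\<lambda>z. lossb n x (snd z))"
      using bound by simp
    also have "\<dots> = measure_pmf.expectation (cond_pmf G A) (\<lambda>z. - lossb n x (snd z))" by simp
    also have "\<dots> \<le> measure_pmf.expectation (cond_pmf G A) H"
      by (rule integral_mono[OF intC intC]) (metis Hge prod.collapse)
    finally show ?thesis .
  qed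
  have l1: "measure_pmf.expectation (cond_pmf G A) (\<lambda>(ys, x'). real (zeros n x) - real (zeros n x'))
      \<ge> - c / (1 - exp (- c))"
    by (rule low) (simp add: zeros_diff_ge)
  have l2: "measure_pmf.expectation (cond_pmf G A) (\<lambda>(ys, x'). min 1 (real (zeros n x) - real (zeros n x')))
      \<ge> - c / (1 - exp (- c))"
  proof (rule low)
    fix ys y
    have "- lossb n x y \<le> 1" using lossb_nonneg[of n x y] by linarith
    then show "- lossb n x y \<le> (case (ys, y) of (ys, x') \<Rightarrow> min 1 (real (zeros n x) - real (zeros n x')))"
      using zeros_diff_ge[of n x y] by simp
  qed
  show ?thesis using l1 l2 unfolding G_def A_def by blast
qed


end
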